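(* Under Assumption 1, let $(x^k)_{k\in\mathbb{N}}$ be generated by PPGA. If $F$ satisfies the KL property at every point of $\mathrm{dom}(F)$, then $\sum_{k=1}^\infty\|x^k-x^{k-1}\|_2<+\infty$ and $(x^k)$ converges to a stationary point of $F$.
   Context: Let $f:\mathbb{R}^n\to(-\infty,+\infty]$ be proper lsc, $g,h:\mathbb{R}^n\to\mathbb{R}$, $\Omega:=\{x:g(x)\ne0\}$, $F(x):=\frac{f(x)+h(x)}{g(x)}$ on $\Omega\cap\mathrm{dom}(f)$ and $+\infty$ otherwise. Assumption 1: (i) $f$ locally Lipschitz on $\mathrm{dom}(f)\cap\Omega$; (ii) $g$ locally Lipschitz continuously differentiable and positive on $\Omega\cap\mathrm{dom}(f)$; (iii) $\nabla h$ is $L$-Lipschitz, $L>0$; (iv) $f+h\ge0$ on $\mathrm{dom}(f)$, $\Omega\cap\mathrm{dom}(f)\ne\emptyset$; (v) $\mathrm{prox}_{f-\gamma g}(x)\ne\emptyset$ for all $x$, $\gamma\ge0$; (vi) $F$ lsc and level bounded. $\mathrm{prox}_\varphi(x):=\arg\min_u\{\varphi(u)+\frac12\|u-x\|_2^2\}$. Fréchet subdifferential $\hat\partial\varphi(x):=\{v:\liminf_{z\to x,z\ne x}\frac{\varphi(z)-\varphi(x)-\langle v,z-x\rangle}{\|z-x\|_2}\ge0\}$; limiting subdifferential $\partial\varphi(x):=\{v:\exists x^k\to x,\ \varphi(x^k)\to\varphi(x),\ v^k\in\hat\partial\varphi(x^k),\ v^k\to v\}$. A stationary point of $F$ is $x^\star$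 with $0\in\hat\partial F(x^\star)$. KL property: proper lsc $\varphi$ has the KL property at $\hat x\in\mathrm{dom}(\partial\varphi)$ if there exist $\eta\in(0,+\infty]$, a neighborhood $U$ of $\hat x$ and a continuous concave $\psi:[0,\eta)\to[0,+\infty)$ with $\psi(0)=0$, $\psi$ continuously differentiable on $(0,\eta)$ with $\psi'>0$, such that $\psi'(\varphi(x)-\varphi(\hat x))\,\mathrm{dist}(0,\partial\varphi(x))\ge1$ for all $x\in U$ with $\varphi(\hat x)<\varphi(x)<\varphi(\hat x)+\eta$. PPGA: choose $x^0\in\Omega\cap\mathrm{dom}(f)$ and $0<\underline\alpha\le\alpha_k\le\overline\alpha<1/L$; for $k=0,1,\dots$ set $C_k:=F(x^k)$ and pick any $x^{k+1}\in\mathrm{prox}_{\alpha_k(f-C_kg)}(x^k-\alpha_k\nabla h(x^k))$. *)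

theory Defs
  imports "HOL-Analysis.Analysis"
begin

definition effdom :: "('a \<Rightarrow> ereal) \<Rightarrow> 'a set" where
  "effdom \<phi> = {x. \<phi> x \<noteq> \<infinity>}"

definition proper_fun :: "('a \<Rightarrow> ereal) \<Rightarrow> bool" where
  "proper_fun \<phi> \<longleftrightarrow> (\<forall>x. \<phi> x \<noteq> -\<infinity>) \<and> (\<exists>x. \<phi> x \<noteq> \<infinity>)"

definition lsc_fun :: "('a::topological_space \<Rightarrow> ereal) \<Rightarrow> bool" where
  "lsc_fun \<phi> \<longleftrightarrow> (\<forall>x. \<phi> x \<le> Liminf (at x) \<phi>)"

definition level_bounded :: "('a::metric_space \<Rightarrow> ereal) \<Rightarrow> bool" where
  "level_bounded \<phi> \<longleftrightarrow> (\<forall>c::real. bounded {x. \<phi> x \<le> ereal c})"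

definition locally_lipschitz_on :: "'a::metric_space set \<Rightarrow> ('a \<Rightarrow> 'b::real_normed_vector) \<Rightarrow> bool" where
  "locally_lipschitz_on S \<phi> \<longleftrightarrow>
     (\<forall>x\<in>S. \<exists>e>0. \<exists>K. \<forall>y\<in>S \<inter> ball x e. \<forall>z\<in>S \<inter> ball x e.
        dist (\<phi> y) (\<phi> z) \<le> K * dist y z)"

definition prox :: "('a::real_normed_vector \<Rightarrow> ereal) \<Rightarrow> 'a \<Rightarrow> 'a set" where
  "prox \<phi> x = {u. \<forall>v. \<phi> u + ereal ((norm (u - x))\<^sup>2 / 2) \<le> \<phi> v + ereal ((norm (v - x))\<^sup>2 / 2)}"

definition frechet_subdiff :: "('a::real_inner \<Rightarrow> ereal) \<Rightarrow> 'a \<Rightarrow> 'a set" where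
  "frechet_subdiff \<phi> x =
     (if \<phi> x \<in> {\<infinity>, -\<infinity>} then {} else
      {v. Liminf (at x) (\<lambda>z. (\<phi> z - \<phi> x - ereal (inner v (z - x))) / ereal (norm (z - x))) \<ge> 0})"

definition limiting_subdiff :: "('a::real_inner \<Rightarrow> ereal) \<Rightarrow> 'a \<Rightarrow> 'a set" where
  "limiting_subdiff \<phi> x =
     {v. \<exists>X V. X \<longlonglongrightarrow> x \<and> (\<lambda>k. \<phi> (X k)) \<longlonglongrightarrow> \<phi> x \<and>
              (\<forall>k. V k \<in> frechet_subdiff \<phi> (X k)) \<and> V \<longlonglongrightarrow> v}"

definition dist_set :: "'a::metric_space \<Rightarrow> 'a set \<Rightarrow> ereal" where
  "dist_set y A = (if A = {} then \<infinity> else ereal (infdist y A))"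

definition KL_property :: "('a::real_inner \<Rightarrow> ereal) \<Rightarrow> 'a \<Rightarrow> bool" where
  "KL_property \<phi> xh \<longleftrightarrow> \<phi> xh \<noteq> \<infinity> \<and> \<phi> xh \<noteq> -\<infinity> \<and>
     (\<exists>(\<eta>::ereal) U (\<psi>::real \<Rightarrow> real) \<psi>'.
        \<eta> > 0 \<and> open U \<and> xh \<in> U \<and>
        continuous_on {t. 0 \<le> t \<and> ereal t < \<eta>} \<psi> \<and>
        concave_on {t. 0 \<le> t \<and> ereal t < \<eta>} \<psi> \<and>
        (\<forall>t. 0 \<le> t \<and> ereal t < \<eta> \<longrightarrow> \<psi> t \<ge> 0) \<and> \<psi> 0 = 0 \<and>
        (\<forall>t. 0 < t \<and> ereal t < \<eta> \<longrightarrow> (\<psi> has_real_derivative \<psi>' t) (at t) \<and> \<psi>' t > 0) \<and>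
        continuous_on {t. 0 < t \<and> ereal t < \<eta>} \<psi>' \<and>
        (\<forall>x\<in>U. \<phi> xh < \<phi> x \<and> \<phi> x < \<phi> xh + \<eta> \<longrightarrow>
            ereal (\<psi>' (real_of_ereal (\<phi> x - \<phi> xh))) * dist_set 0 (limiting_subdiff \<phi> x) \<ge> 1))"

definition frac_obj :: "('a \<Rightarrow> ereal) \<Rightarrow> ('a \<Rightarrow> real) \<Rightarrow> ('a \<Rightarrow> real) \<Rightarrow> 'a \<Rightarrow> ereal" where
  "frac_obj f g h x =
     (if g x \<noteq> 0 \<and> f x \<noteq> \<infinity> then ereal ((real_of_ereal (f x) + h x) / g x) else \<infinity>)"

definition PPGA_seq :: "('a::euclidean_space \<Rightarrow> ereal) \<Rightarrow> ('a \<Rightarrow> real) \<Rightarrow> ('a \<Rightarrow> real) \<Rightarrow> ('a \<Rightarrow> 'a)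
     \<Rightarrow> real \<Rightarrow> (nat \<Rightarrow> real) \<Rightarrow> (nat \<Rightarrow> 'a) \<Rightarrow> bool" where
  "PPGA_seq f g h gradh L \<alpha> x \<longleftrightarrow>
     x 0 \<in> {y. g y \<noteq> 0} \<inter> effdom f \<and>
     (\<exists>\<alpha>lo \<alpha>hi. 0 < \<alpha>lo \<and> \<alpha>lo \<le> \<alpha>hi \<and> \<alpha>hi < 1 / L \<and> (\<forall>k. \<alpha>lo \<le> \<alpha> k \<and> \<alpha> k \<le> \<alpha>hi)) \<and>
     (\<forall>k. x (Suc k) \<in> prox
        (\<lambda>u. ereal (\<alpha> k) * (f u - ereal (real_of_ereal (frac_obj f g h (x k)) * g u)))
        (x k - \<alpha> k *\<^sub>R gradh (x k)))"

end

theory Submission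
  imports Defs
begin


lemma lsc_seq:
  fixes \<phi> :: "'a::metric_space \<Rightarrow> ereal"
  assumes lsc: "lsc_fun \<phi>" and X: "X \<longlonglongrightarrow> xb" and le: "\<And>k. \<phi> (X k) \<le> ereal (c k)"
    and c: "c \<longlonglongrightarrow> cl"
  shows "\<phi> xb \<le> ereal cl"
proof (rule ccontr)
  assume "\<not> ?thesis"
  hence lt: "ereal cl < \<phi> xb" by simp
  then obtain y where y1: "ereal cl < y" and y2: "y < \<phi> xb" using ereal_dense2 by blast
  have "\<forall>y'<\<phi> xb. eventually (\<lambda>z. y' < \<phi> z) (at xb)"
    using lsc unfolding lsc_fun_def by (simp add: le_Liminf_iff)
  hence "eventually (\<lambda>z. y < \<phi> z) (at xb)" using y2 by blast
  hence ev1: "eventually (\<lambda>z. y < \<phi> z) (nhds xb)" using y2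
    unfolding eventually_at_filter by (auto elim!: eventually_mono)
  then obtain S where S: "open S" "xb \<in> S" "\<forall>z\<in>S. y < \<phi> z"
    unfolding eventually_nhds by blast
  have "eventually (\<lambda>k. X k \<in> S) sequentially" using topological_tendstoD[OF X S(1,2)] .
  hence ev2: "eventually (\<lambda>k. y < \<phi> (X k)) sequentially" using S(3) by (auto elim!: eventually_mono)
  have "((\<lambda>k. ereal (c k)) \<longlongrightarrow> ereal cl) sequentially" using c by simp
  hence ev3: "eventually (\<lambda>k. ereal (c k) < y) sequentially" using y1 order_tendstoD(2) by blast
  obtain k where "y < \<phi> (X k)" "ereal (c k) < y" using eventually_conj[OF ev2 ev3] eventually_sequentially by auto
  with le[of k] show False by simp
qed

lemma lsc_closed_sublevel:
  fixes \<phi> :: "'a::metric_space \<Rightarrow> ereal"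
  assumes lsc: "lsc_fun \<phi>"
  shows "closed {x. \<phi> x \<le> ereal c}"
  unfolding closed_sequential_limits
proof (intro allI impI, elim conjE)
  fix X l assume "\<forall>n. X n \<in> {x. \<phi> x \<le> ereal c}" "X \<longlonglongrightarrow> l"
  then show "l \<in> {x. \<phi> x \<le> ereal c}" using lsc_seq[OF lsc, of X l "\<lambda>_. c" c] by auto
qed




lemma frechet_I:
  fixes \<phi> :: "'a::real_inner \<Rightarrow> ereal"
  assumes px: "\<phi> p = ereal c"
    and ev: "\<And>e. e > 0 \<Longrightarrow> eventually (\<lambda>z. ereal (c + inner v (z - p) - e * norm (z - p)) \<le> \<phi> z) (at p)"
  shows "v \<in> frechet_subdiff \<phi> p"
proof -
  have "0 \<le> Liminf (at p) (\<lambda>z. (\<phi> z - \<phi> p - ereal (inner v (z - p))) / ereal (norm (z - p)))"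
    unfolding le_Liminf_iff
  proof (intro allI impI)
    fix y :: ereal assume y: "y < 0"
    obtain e where e: "e > 0" "y < ereal (-e)"
    proof (cases y)
      case (real r) thus ?thesis using y that[of "-r/2"] by auto
    next
      case PInf thus ?thesis using y by auto
    next
      case MInf thus ?thesis using that[of 1] by auto
    qed
    have neq: "eventually (\<lambda>z. z \<noteq> p) (at p)" by (simp add: eventually_at_filter)
    show "eventually (\<lambda>z. y < (\<phi> z - \<phi> p - ereal (inner v (z - p))) / ereal (norm (z - p))) (at p)"
      using eventually_conj[OF ev[OF e(1)] neq]
    proof (rule eventually_mono)
      fix z assume z: "ereal (c + inner v (z - p) - e * norm (z - p)) \<le> \<phi> z \<and> z \<noteq> p"
      hence n: "norm (z - p) > 0" by auto
      show "y < (\<phi> z - \<phi> p - ereal (inner v (z - p))) / ereal (norm (z - p))"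
      proof (cases "\<phi> z")
        case (real t)
        have "t \<ge> c + inner v (z - p) - e * norm (z - p)" using z real by simp
        hence "(t - c - inner v (z - p)) \<ge> (-e) * norm (z - p)" by simp
        hence "(t - c - inner v (z - p)) / norm (z - p) \<ge> -e" using n by (simp add: le_divide_eq)
        hence "ereal (-e) \<le> ereal ((t - c - inner v (z - p)) / norm (z - p))" by simp
        thus ?thesis using e(2) real px n by (simp del: ereal_less_eq add: order_less_le_trans)
      next
        case PInf thus ?thesis using px n y by auto
      next
        case MInf thus ?thesis using z by simp
      qed
    qed
  qed
  thus ?thesis unfolding frechet_subdiff_def using px by simp
qed

lemma frechet_quot:
  fixes \<phi> :: "'a::euclidean_space \<Rightarrow> ereal"
  assumes px: "\<phi> p = ereal c" and gp: "g p > 0"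
    and gd: "(g has_derivative (\<lambda>v. inner G v)) (at p)"
    and M: "M \<ge> 0"
    and H: "\<And>z. \<phi> z \<noteq> \<infinity> \<Longrightarrow> g z > 0 \<and> \<phi> z = ereal (N z / g z) \<and>
              N z - c * g z \<ge> inner w (z - p) + \<beta> * (g z - g p - inner G (z - p)) - M * (norm (z - p))^2"
  shows "(1 / g p) *\<^sub>R w \<in> frechet_subdiff \<phi> p"
proof (rule frechet_I[where \<phi>=\<phi> and p=p, OF px])
  fix e :: real assume e: "e > 0"
  define \<epsilon> where "\<epsilon> = e * g p / 6"
  have \<epsilon>: "\<epsilon> > 0" using e gp by (simp add: \<epsilon>_def)
  define \<epsilon>1 where "\<epsilon>1 = min 1 (\<epsilon> / (\<bar>\<beta>\<bar> + 1))"
  have \<epsilon>1: "\<epsilon>1 > 0" "\<epsilon>1 \<le> 1" "\<bar>\<beta>\<bar> * \<epsilon>1 \<le> \<epsilon>"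
  proof -
    show "\<epsilon>1 > 0" "\<epsilon>1 \<le> 1" using \<epsilon> by (auto simp: \<epsilon>1_def)
    have "\<epsilon>1 \<le> \<epsilon> / (\<bar>\<beta>\<bar> + 1)" by (simp add: \<epsilon>1_def)
    hence "(\<bar>\<beta>\<bar> + 1) * \<epsilon>1 \<le> \<epsilon>" by (simp add: le_divide_eq mult.commute)
    moreover have "\<bar>\<beta>\<bar> * \<epsilon>1 \<le> (\<bar>\<beta>\<bar> + 1) * \<epsilon>1" using \<open>\<epsilon>1 > 0\<close> by (simp add: mult_right_mono)
    ultimately show "\<bar>\<beta>\<bar> * \<epsilon>1 \<le> \<epsilon>" by linarith
  qed
  obtain d1 where d1: "d1 > 0" "\<And>z. norm (z - p) < d1 \<Longrightarrow> norm (g z - g p - inner G (z - p)) \<le> \<epsilon>1 * norm (z - p)"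
    using gd \<epsilon>1(1) unfolding has_derivative_at_alt by blast
  define K where "K = norm G + 1"
  have K: "K > 0" unfolding K_def by (smt (verit) norm_ge_zero)
  define \<epsilon>2 where "\<epsilon>2 = min (g p / 2) (\<epsilon> * g p / (norm w + 1))"
  have \<epsilon>2: "\<epsilon>2 > 0" "\<epsilon>2 \<le> g p / 2" "\<epsilon>2 * norm w \<le> \<epsilon> * g p"
  proof -
    have nw: "norm w + 1 > 0" by (smt (verit) norm_ge_zero)
    show "\<epsilon>2 > 0" using \<epsilon> gp nw by (auto simp: \<epsilon>2_def)
    show "\<epsilon>2 \<le> g p / 2" unfolding \<epsilon>2_def by (rule min.cobounded1)
    have "\<epsilon>2 \<le> \<epsilon> * g p / (norm w + 1)" by (simp add: \<epsilon>2_def)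
    hence "\<epsilon>2 * (norm w + 1) \<le> \<epsilon> * g p" using nw by (simp add: le_divide_eq)
    moreover have "\<epsilon>2 * norm w \<le> \<epsilon>2 * (norm w + 1)" using \<open>\<epsilon>2 > 0\<close> by simp
    ultimately show "\<epsilon>2 * norm w \<le> \<epsilon> * g p" by linarith
  qed
  define d where "d = min d1 (min (\<epsilon> / (M + 1)) (\<epsilon>2 / K))"
  have d: "d > 0" using d1 \<epsilon> \<epsilon>2 K M by (simp add: d_def)
  show "eventually (\<lambda>z. ereal (c + inner ((1 / g p) *\<^sub>R w) (z - p) - e * norm (z - p)) \<le> \<phi> z) (at p)"
    unfolding eventually_at
  proof (rule exI[of _ d], intro conjI ballI impI)
    show "d > 0" by fact
    fix z assume "z \<in> UNIV" "z \<noteq> p \<and> dist z p < d"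
    hence nz: "norm (z - p) < d" by (simp add: dist_norm)
    define n where "n = norm (z - p)"
    have n0: "n \<ge> 0" by (simp add: n_def)
    show "ereal (c + inner ((1 / g p) *\<^sub>R w) (z - p) - e * norm (z - p)) \<le> \<phi> z"
    proof (cases "\<phi> z = \<infinity>")
      case True thus ?thesis by simp
    next
      case False
      note HZ = H[OF False]
      define R where "R = g z - g p - inner G (z - p)"
      have R: "\<bar>R\<bar> \<le> \<epsilon>1 * n" using d1(2)[of z] nz by (simp add: R_def n_def d_def)
      have "\<bar>inner G (z - p)\<bar> \<le> norm G * n" unfolding n_def by (rule Cauchy_Schwarz_ineq2)
      moreover have "\<epsilon>1 * n \<le> 1 * n" using \<epsilon>1(2) n0 by (rule mult_right_mono)
      moreover have "K * n = norm G * n + n" by (simp add: K_def distrib_right)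
      ultimately have gdiff: "\<bar>g z - g p\<bar> \<le> K * n" using R unfolding R_def by linarith
      have "n < \<epsilon>2 / K" using nz by (simp add: n_def d_def)
      hence "K * n < \<epsilon>2" using K by (simp add: less_divide_eq mult.commute)
      hence gdiff2: "\<bar>g z - g p\<bar> < \<epsilon>2" using gdiff by linarith
      have gz: "g z > g p / 2" using gdiff2 \<epsilon>2 by linarith
      have "n < \<epsilon> / (M + 1)" using nz by (simp add: n_def d_def)
      hence "(M + 1) * n \<le> \<epsilon>" using M by (simp add: less_divide_eq mult.commute)
      moreover have "(M + 1) * n = M * n + n" by (simp add: distrib_right)
      ultimately have Mn: "M * n \<le> \<epsilon>" using n0 by linarith
      have Mn2: "M * n^2 \<le> \<epsilon> * n" using mult_right_mono[OF Mn n0] by (simp add: power2_eq_square mult.assoc)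
      have bR: "\<beta> * R \<ge> - (\<epsilon> * n)"
      proof -
        have "\<bar>\<beta> * R\<bar> \<le> \<bar>\<beta>\<bar> * (\<epsilon>1 * n)" using R by (simp add: abs_mult mult_left_mono)
        also have "\<dots> \<le> \<epsilon> * n" using mult_right_mono[OF \<epsilon>1(3) n0] by (simp add: mult.assoc)
        finally show ?thesis by linarith
      qed
      have Nz: "N z - c * g z \<ge> inner w (z - p) - 2 * (\<epsilon> * n)"
        using HZ bR Mn2 unfolding R_def n_def by linarith
      have wz: "\<bar>inner w (z - p)\<bar> \<le> norm w * n" unfolding n_def by (rule Cauchy_Schwarz_ineq2)
      have "\<bar>(g z - g p) * inner w (z - p)\<bar> \<le> \<epsilon>2 * (norm w * n)"
        using gdiff2 wz by (simp add: abs_mult mult_mono')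
      also have "\<dots> \<le> \<epsilon> * g p * n" using mult_right_mono[OF \<epsilon>2(3) n0] by (simp add: mult.assoc)
      finally have T: "(g z - g p) * inner w (z - p) \<le> \<epsilon> * g p * n" by linarith
      have eg: "e * g z * n \<ge> 3 * \<epsilon> * n"
      proof -
        have "e * g z \<ge> e * (g p / 2)" using gz e by simp
        hence "e * g z \<ge> 3 * \<epsilon>" by (simp add: \<epsilon>_def)
        thus ?thesis using n0 by (simp add: mult_right_mono)
      qed
      have gzpos: "g z > 0" using HZ by simp
      have key: "(c + inner w (z - p) / g p - e * n) * g z \<le> N z"
      proof -
        have "(c + inner w (z - p) / g p - e * n) * g z
              = c * g z + inner w (z - p) + (g z - g p) * inner w (z - p) / g p - e * g z * n"
          using gp by (simp add: field_simps)
        also have "(g z - g p) * inner w (z - p) / g p \<le> \<epsilon> * n"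
        proof -
          have "\<epsilon> * g p * n = \<epsilon> * n * g p" by (simp add: ac_simps)
          thus ?thesis using T gp by (simp only: divide_le_eq) simp
        qed
        hence "c * g z + inner w (z - p) + (g z - g p) * inner w (z - p) / g p - e * g z * n
              \<le> c * g z + inner w (z - p) + \<epsilon> * n - 3 * \<epsilon> * n" using eg by linarith
        also have "\<dots> \<le> N z" using Nz by linarith
        finally show ?thesis .
      qed
      hence "c + inner w (z - p) / g p - e * n \<le> N z / g z" using gzpos by (simp add: le_divide_eq)
      thus ?thesis using HZ by (simp add: n_def)
    qed
  qed
qed




lemma descent:
  fixes h :: "'a::euclidean_space \<Rightarrow> real"
  assumes hd: "\<And>y. (h has_derivative (\<lambda>v. inner (gh y) v)) (at y)"
    and lip: "\<And>y z. norm (gh y - gh z) \<le> L * norm (y - z)"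
  shows "h u \<le> h z + inner (gh z) (u - z) + L / 2 * (norm (u - z))^2"
proof -
  define d where "d = u - z"
  define \<phi> where "\<phi> t = h (z + t *\<^sub>R d) - t * inner (gh z) d - L / 2 * t^2 * (norm d)^2" for t
  have der: "(\<phi> has_real_derivative (inner (gh (z + t *\<^sub>R d)) d - inner (gh z) d - L * t * (norm d)^2)) (at t)" for t
  proof -
    have l: "((\<lambda>t. z + t *\<^sub>R d) has_derivative (\<lambda>s. s *\<^sub>R d)) (at t)"
      by (auto intro!: derivative_eq_intros)
    have "((\<lambda>t. h (z + t *\<^sub>R d)) has_derivative (\<lambda>s. inner (gh (z + t *\<^sub>R d)) (s *\<^sub>R d))) (at t)"
      using has_derivative_compose[OF l hd] .
    hence h1: "((\<lambda>t. h (z + t *\<^sub>R d)) has_real_derivative inner (gh (z + t *\<^sub>R d)) d) (at t)"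
      unfolding has_field_derivative_def
      by (rule has_derivative_eq_rhs) (auto simp: fun_eq_iff mult.commute)
    have a: "((\<lambda>t. t * inner (gh z) d) has_real_derivative 1 * inner (gh z) d) (at t)"
      by (rule DERIV_cmult_right[OF DERIV_ident])
    have b: "((\<lambda>t. L / 2 * t^2 * (norm d)^2) has_real_derivative L * t * (norm d)^2) (at t)"
      by (rule DERIV_cong[OF DERIV_cmult_right[OF DERIV_cmult[OF DERIV_pow]]]) simp
    have "(\<phi> has_real_derivative (inner (gh (z + t *\<^sub>R d)) d - 1 * inner (gh z) d - L * t * (norm d)^2)) (at t)"
      unfolding \<phi>_def by (rule DERIV_diff[OF DERIV_diff[OF h1 a] b])
    thus ?thesis by (rule DERIV_cong) simp
  qed
  have "\<phi> 1 \<le> \<phi> 0"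
  proof (rule DERIV_nonpos_imp_nonincreasing[of 0 1 \<phi>])
    fix t :: real assume t: "0 \<le> t" "t \<le> 1"
    have "inner (gh (z + t *\<^sub>R d)) d - inner (gh z) d = inner (gh (z + t *\<^sub>R d) - gh z) d"
      by (simp add: inner_diff_left)
    also have "\<dots> \<le> norm (gh (z + t *\<^sub>R d) - gh z) * norm d" by (rule norm_cauchy_schwarz)
    also have "\<dots> \<le> (L * norm (t *\<^sub>R d)) * norm d"
      using lip[of "z + t *\<^sub>R d" z] by (simp add: mult_right_mono)
    also have "\<dots> = L * t * (norm d)^2" using t by (simp add: power2_eq_square)
    finally show "\<exists>y. DERIV \<phi> t :> y \<and> y \<le> 0" using der by force
  qed simp
  thus ?thesis unfolding \<phi>_def d_def by simp
qed

lemma concave_tangent: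
  fixes \<psi> :: "real \<Rightarrow> real" and \<eta> :: ereal
  assumes cc: "concave_on {t. 0 \<le> t \<and> ereal t < \<eta>} \<psi>"
    and s: "0 < s" "ereal s < \<eta>" and d: "(\<psi> has_real_derivative D) (at s)"
    and t: "0 \<le> t" "t \<le> s"
  shows "\<psi> s - \<psi> t \<ge> D * (s - t)"
proof -
  obtain y where y: "ereal s < y" "y < \<eta>" using s(2) ereal_dense2 by blast
  then obtain s' where s': "y = ereal s'" by (cases y) auto
  have sub: "{0..s'} \<subseteq> {t. 0 \<le> t \<and> ereal t < \<eta>}"
  proof
    fix x assume "x \<in> {0..s'}"
    hence "0 \<le> x" "ereal x \<le> y" using s' by auto
    thus "x \<in> {t. 0 \<le> t \<and> ereal t < \<eta>}" using y(2) by simp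
  qed
  have cv: "convex_on {0..s'} (\<lambda>x. - \<psi> x)"
    using cc sub unfolding concave_on_def by (rule convex_on_subset) simp
  have "(-\<psi> t) - (-\<psi> s) \<ge> (-D) * (t - s)"
  proof (rule convex_on_imp_above_tangent[OF cv])
    show "connected {0..s'}" by simp
    show "s \<in> interior {0..s'}" using s y s' by simp
    show "t \<in> {0..s'}" using t y s' by simp
    show "((\<lambda>x. - \<psi> x) has_real_derivative - D) (at s within {0..s'})"
      by (rule has_field_derivative_at_within[OF DERIV_minus[OF d]])
  qed
  thus ?thesis by (simp add: algebra_simps)
qed

lemma psi_mono:
  fixes \<psi> \<psi>' :: "real \<Rightarrow> real" and \<eta> :: ereal
  assumes cont: "continuous_on {t. 0 \<le> t \<and> ereal t < \<eta>} \<psi>"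
    and der: "\<forall>t. 0 < t \<and> ereal t < \<eta> \<longrightarrow> (\<psi> has_real_derivative \<psi>' t) (at t) \<and> \<psi>' t > 0"
    and ts: "0 \<le> t" "t \<le> s" "ereal s < \<eta>"
  shows "\<psi> t \<le> \<psi> s"
proof (rule DERIV_nonneg_imp_increasing_open[OF ts(2)])
  fix x assume x: "t < x" "x < s"
  have xs: "ereal x \<le> ereal s" using x by simp
  have "0 < x \<and> ereal x < \<eta>" using ts x order_le_less_trans[OF xs ts(3)] by simp
  thus "\<exists>y. DERIV \<psi> x :> y \<and> 0 \<le> y" using der by (meson less_imp_le)
next
  have "{t..s} \<subseteq> {t. 0 \<le> t \<and> ereal t < \<eta>}"
  proof
    fix x assume x: "x \<in> {t..s}"
    hence xs: "ereal x \<le> ereal s" by simp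
    show "x \<in> {t. 0 \<le> t \<and> ereal t < \<eta>}" using ts x order_le_less_trans[OF xs ts(3)] by simp
  qed
  thus "continuous_on {t..s} \<psi>" using cont continuous_on_subset by blast
qed

lemma amgm_le:
  fixes X u v :: real
  assumes "X \<ge> 0" "u \<ge> 0" "v \<ge> 0" "X^2 \<le> u * v"
  shows "2 * X \<le> u + v"
proof -
  have "(2 * X)^2 \<le> (u + v)^2"
  proof -
    have "(2*X)^2 = 4 * X^2" by (simp add: power2_eq_square)
    also have "\<dots> \<le> 4 * (u * v)" using assms(4) by simp
    also have "\<dots> \<le> (u + v)^2"
    proof -
      have "(u + v)^2 = (u - v)^2 + 4 * (u * v)" by (simp add: power2_eq_square algebra_simps)
      moreover have "(u - v)^2 \<ge> 0" by simp
      ultimately show ?thesis by linarith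
    qed
    finally show ?thesis .
  qed
  moreover have "0 \<le> u + v" using assms by simp
  ultimately show ?thesis by (rule power2_le_imp_le)
qed

lemma frechet_limiting:
  assumes "v \<in> frechet_subdiff \<phi> p"
  shows "dist_set 0 (limiting_subdiff \<phi> p) \<le> ereal (norm v)"
proof -
  have "v \<in> limiting_subdiff \<phi> p" unfolding limiting_subdiff_def
    using assms by (intro CollectI exI[of _ "\<lambda>_. p"] exI[of _ "\<lambda>_. v"]) auto
  hence "infdist 0 (limiting_subdiff \<phi> p) \<le> dist 0 v" by (rule infdist_le)
  thus ?thesis unfolding dist_set_def using \<open>v \<in> limiting_subdiff \<phi> p\<close> by auto
qed




lemma norm_add_sq: "(norm (a + b))^2 = (norm a)^2 + 2 * inner a b + (norm (b::'a::real_inner))^2"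
  by (simp add: power2_norm_eq_inner inner_add_left inner_add_right inner_commute)

locale ppga_loc =
  fixes f :: "'a::euclidean_space \<Rightarrow> ereal"
    and g h :: "'a \<Rightarrow> real"
    and gradg gradh :: "'a \<Rightarrow> 'a"
    and L :: real
    and \<alpha> :: "nat \<Rightarrow> real"
    and x :: "nat \<Rightarrow> 'a"
    and alo ahi :: real
  assumes f_proper: "proper_fun f"
    and f_lsc: "lsc_fun f"
    and A1_ii_diff: "\<forall>y \<in> {y. g y \<noteq> 0} \<inter> effdom f. (g has_derivative (\<lambda>v. inner (gradg y) v)) (at y)"
    and A1_ii_lip: "locally_lipschitz_on ({y. g y \<noteq> 0} \<inter> effdom f) gradg"
    and A1_ii_pos: "\<forall>y \<in> {y. g y \<noteq> 0} \<inter> effdom f. g y > 0"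
    and A1_iii_diff: "\<forall>y. (h has_derivative (\<lambda>v. inner (gradh y) v)) (at y)"
    and A1_iii_lip: "\<forall>y z. norm (gradh y - gradh z) \<le> L * norm (y - z)"
    and A1_iii_L: "L > 0"
    and A1_iv_nonneg: "\<forall>y \<in> effdom f. f y + ereal (h y) \<ge> 0"
    and A1_vi_lsc: "lsc_fun (frac_obj f g h)"
    and A1_vi_lb: "level_bounded (frac_obj f g h)"
    and x0: "x 0 \<in> {y. g y \<noteq> 0} \<inter> effdom f"
    and alo: "0 < alo" "alo \<le> ahi" "ahi < 1 / L" "\<And>k. alo \<le> \<alpha> k" "\<And>k. \<alpha> k \<le> ahi"
    and step: "\<And>k. x (Suc k) \<in> prox
        (\<lambda>u. ereal (\<alpha> k) * (f u - ereal (real_of_ereal (frac_obj f g h (x k)) * g u)))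
        (x k - \<alpha> k *\<^sub>R gradh (x k))"
    and KL: "\<forall>y \<in> effdom (frac_obj f g h). KL_property (frac_obj f g h) y"
begin

abbreviation "F \<equiv> frac_obj f g h"
abbreviation "Om \<equiv> {y. g y \<noteq> 0} \<inter> effdom f"
definition "fr y = real_of_ereal (f y)"
definition "C k = real_of_ereal (F (x k))"
definition "d k = norm (x (Suc k) - x k)"
definition "q k = (1 / \<alpha> k) *\<^sub>R (x (Suc k) - x k) + gradh (x k)"

lemma apos: "\<alpha> k > 0" using alo(1) alo(4)[of k] by linarith

lemma f_fin: "y \<in> effdom f \<Longrightarrow> f y = ereal (fr y)"
  using f_proper unfolding proper_fun_def effdom_def fr_def by (cases "f y") auto

lemma F_Om: "y \<in> Om \<Longrightarrow> F y = ereal ((fr y + h y) / g y)"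
  unfolding frac_obj_def fr_def effdom_def by auto

lemma F_notOm: "F y \<noteq> \<infinity> \<Longrightarrow> y \<in> Om"
  unfolding frac_obj_def effdom_def by (auto split: if_splits)

lemma gpos: "y \<in> Om \<Longrightarrow> g y > 0" using A1_ii_pos by blast

lemma nonneg: "y \<in> effdom f \<Longrightarrow> fr y + h y \<ge> 0"
  using A1_iv_nonneg f_fin by force

lemma prox_ineq:
  shows "x (Suc k) \<in> effdom f"
    and "v \<in> effdom f \<Longrightarrow> \<alpha> k * (fr (x (Suc k)) - C k * g (x (Suc k))) + (norm (x (Suc k) - (x k - \<alpha> k *\<^sub>R gradh (x k))))^2 / 2
        \<le> \<alpha> k * (fr v - C k * g v) + (norm (v - (x k - \<alpha> k *\<^sub>R gradh (x k))))^2 / 2"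
proof -
  define p where "p = x (Suc k)"
  define y where "y = x k - \<alpha> k *\<^sub>R gradh (x k)"
  have P: "\<And>v. ereal (\<alpha> k) * (f p - ereal (C k * g p)) + ereal ((norm (p - y))^2 / 2)
          \<le> ereal (\<alpha> k) * (f v - ereal (C k * g v)) + ereal ((norm (v - y))^2 / 2)"
    using step[of k] unfolding prox_def p_def y_def C_def by blast
  have pd: "p \<in> effdom f"
  proof (rule ccontr)
    assume "p \<notin> effdom f"
    hence fp: "f p = \<infinity>" unfolding effdom_def by simp
    have "x k \<in> effdom f \<or> True" by simp
    obtain v where v: "f v \<noteq> \<infinity>" using f_proper unfolding proper_fun_def by blast
    have "v \<in> effdom f" using v unfolding effdom_def by simp
    from P[of v] show False using fp f_fin[OF \<open>v \<in> effdom f\<close>] apos[of k] by simp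
  qed
  thus "x (Suc k) \<in> effdom f" unfolding p_def .
  assume vd: "v \<in> effdom f"
  from P[of v] show "\<alpha> k * (fr (x (Suc k)) - C k * g (x (Suc k))) + (norm (x (Suc k) - (x k - \<alpha> k *\<^sub>R gradh (x k))))^2 / 2
        \<le> \<alpha> k * (fr v - C k * g v) + (norm (v - (x k - \<alpha> k *\<^sub>R gradh (x k))))^2 / 2"
    using f_fin[OF pd] f_fin[OF vd] unfolding p_def y_def by simp
qed

lemma IQ:
  assumes u: "u \<in> effdom f"
  shows "fr u \<ge> fr (x (Suc k)) + C k * (g u - g (x (Suc k))) - (norm (u - x (Suc k)))^2 / (2 * \<alpha> k)
           - inner (u - x (Suc k)) (q k)"
proof -
  define p where "p = x (Suc k)"
  define y where "y = x k - \<alpha> k *\<^sub>R gradh (x k)"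
  have a: "\<alpha> k > 0" by (rule apos)
  have I: "\<alpha> k * (fr p - C k * g p) + (norm (p - y))^2 / 2 \<le> \<alpha> k * (fr u - C k * g u) + (norm (u - y))^2 / 2"
    using prox_ineq(2)[OF u, of k] unfolding p_def y_def .
  have py: "p - y = \<alpha> k *\<^sub>R q k" using a unfolding p_def y_def q_def by (simp add: algebra_simps)
  have "u - y = (u - p) + (p - y)" by simp
  hence "(norm (u - y))^2 = (norm (u - p))^2 + 2 * inner (u - p) (p - y) + (norm (p - y))^2"
    using norm_add_sq by metis
  also have "inner (u - p) (p - y) = \<alpha> k * inner (u - p) (q k)" using py by simp
  finally have "\<alpha> k * (fr p - C k * g p) \<le> \<alpha> k * (fr u - C k * g u) + (norm (u - p))^2 / 2 + \<alpha> k * inner (u - p) (q k)"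
    using I by linarith
  hence "\<alpha> k * (fr p - C k * g p) \<le> \<alpha> k * (fr u - C k * g u + (norm (u - p))^2 / (2 * \<alpha> k) + inner (u - p) (q k))"
    using a by (simp add: algebra_simps)
  hence "fr p - C k * g p \<le> fr u - C k * g u + (norm (u - p))^2 / (2 * \<alpha> k) + inner (u - p) (q k)"
    using a by simp
  thus ?thesis unfolding p_def by (simp add: algebra_simps)
qed

definition "cc = 1 / (2 * ahi) - L / 2"

lemma cc_pos: "cc > 0"
proof -
  have "ahi > 0" using alo by linarith
  hence "ahi * L < 1" using alo(3) A1_iii_L by (simp add: less_divide_eq mult.commute)
  hence "L / 2 < 1 / (2 * ahi)" using \<open>ahi > 0\<close> by (simp add: field_simps)
  thus ?thesis unfolding cc_def by simp
qed

lemma h_up: "h u \<le> h z + inner (gradh z) (u - z) + L / 2 * (norm (u - z))^2"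
  by (rule descent[where gh=gradh]) (use A1_iii_diff A1_iii_lip in auto)

lemma h_low: "h u \<ge> h z + inner (gradh z) (u - z) - L / 2 * (norm (u - z))^2"
proof -
  have "(\<lambda>y. - h y) u \<le> (\<lambda>y. - h y) z + inner ((\<lambda>y. - gradh y) z) (u - z) + L / 2 * (norm (u - z))^2"
  proof (rule descent[where gh="\<lambda>y. - gradh y"])
    fix y show "((\<lambda>y. - h y) has_derivative (\<lambda>v. inner (- gradh y) v)) (at y)"
      using has_derivative_minus[OF A1_iii_diff[rule_format, of y]] by simp
  next
    fix y z show "norm (- gradh y - - gradh z) \<le> L * norm (y - z)"
      using A1_iii_lip by (metis minus_diff_eq minus_diff_minus norm_minus_cancel)
  qed
  thus ?thesis by simp
qed

lemma C_Om: "y \<in> Om \<Longrightarrow> y = x k \<Longrightarrow> C k * g (x k) = fr (x k) + h (x k)"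
  unfolding C_def using F_Om[of y] gpos[of y] by simp

lemma dec_step:
  assumes xk: "x k \<in> Om"
  shows "x (Suc k) \<in> Om \<and> C (Suc k) \<le> C k - cc * (d k)^2 / g (x (Suc k))"
proof -
  define p where "p = x (Suc k)"
  define D where "D = p - x k"
  have pd: "p \<in> effdom f" unfolding p_def by (rule prox_ineq(1))
  have a: "\<alpha> k > 0" by (rule apos)
  have I: "fr (x k) \<ge> fr p + C k * (g (x k) - g p) - (norm (x k - p))^2 / (2 * \<alpha> k) - inner (x k - p) (q k)"
    using IQ[of "x k" k] xk unfolding p_def by blast
  have "inner (x k - p) (q k) = inner (- D) ((1 / \<alpha> k) *\<^sub>R D + gradh (x k))"
    unfolding q_def D_def p_def by simp
  also have "\<dots> = - ((norm D)^2 / \<alpha> k) - inner D (gradh (x k))"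
    by (simp add: inner_add_right power2_norm_eq_inner)
  finally have i1: "inner (x k - p) (q k) = - ((norm D)^2 / \<alpha> k) - inner D (gradh (x k))" .
  have n1: "norm (x k - p) = norm D" unfolding D_def by (rule norm_minus_commute)
  have h1: "h p \<le> h (x k) + inner (gradh (x k)) D + L / 2 * (norm D)^2"
    using h_up[of p "x k"] unfolding D_def .
  have Cg: "C k * g (x k) = fr (x k) + h (x k)" using C_Om[OF xk refl] .
  have sq: "(norm D)^2 / (2 * \<alpha> k) = (norm D)^2 / \<alpha> k - (norm D)^2 / (2 * \<alpha> k)" by (simp add: field_simps)
  have main: "fr p + h p - C k * g p \<le> - ((1 / (2 * \<alpha> k) - L / 2) * (norm D)^2)"
    using I i1 n1 h1 Cg sq by (simp add: algebra_simps inner_commute)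
  have "1 / (2 * ahi) \<le> 1 / (2 * \<alpha> k)" using a alo(5)[of k] by (simp add: frac_le)
  hence "cc * (norm D)^2 \<le> (1 / (2 * \<alpha> k) - L / 2) * (norm D)^2"
    unfolding cc_def by (simp add: mult_right_mono)
  hence main2: "fr p + h p - C k * g p \<le> - (cc * (norm D)^2)" using main by linarith
  have E: "fr p + h p \<ge> 0" using nonneg[OF pd] .
  have Ck: "C k \<ge> 0"
  proof -
    have "C k = (fr (x k) + h (x k)) / g (x k)" using Cg gpos[OF xk] by (simp add: field_simps)
    thus ?thesis using nonneg[of "x k"] xk gpos[OF xk] by simp
  qed
  have gp: "g p > 0"
  proof (rule ccontr)
    assume "\<not> g p > 0"
    hence "C k * g p \<le> 0" using Ck by (simp add: mult_nonneg_nonpos)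
    hence "cc * (norm D)^2 \<le> 0" using main2 E by linarith
    hence "norm D = 0" using cc_pos by (simp add: mult_le_0_iff)
    hence "p = x k" unfolding D_def by simp
    thus False using \<open>\<not> g p > 0\<close> gpos[OF xk] by simp
  qed
  have pOm: "p \<in> Om" using pd gp by simp
  have "C (Suc k) = (fr p + h p) / g p" using F_Om[OF pOm] unfolding C_def p_def by simp
  also have "\<dots> \<le> (C k * g p - cc * (norm D)^2) / g p" using main2 gp by (simp add: divide_right_mono)
  also have "\<dots> = C k - cc * (d k)^2 / g p" using gp unfolding d_def D_def p_def by (simp add: field_simps)
  finally show ?thesis using pOm unfolding p_def by simp
qed

lemma x_Om: "x k \<in> Om"
  by (induction k) (use x0 dec_step in auto)

lemma C_dec: "C (Suc k) \<le> C k - cc * (d k)^2 / g (x (Suc k))"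
  using dec_step[OF x_Om] by blast

lemma F_x: "F (x k) = ereal (C k)"
  unfolding C_def using F_Om[OF x_Om] by simp

lemma C_eq: "C k = (fr (x k) + h (x k)) / g (x k)"
  unfolding C_def using F_Om[OF x_Om] by simp

lemma C_nonneg: "C k \<ge> 0"
  using C_eq nonneg[of "x k"] x_Om[of k] gpos[OF x_Om[of k]] by simp

lemma C_decseq: "decseq C"
proof (rule decseq_SucI)
  fix k
  have "cc * (d k)^2 / g (x (Suc k)) \<ge> 0" using cc_pos gpos[OF x_Om[of "Suc k"]] by simp
  thus "C (Suc k) \<le> C k" using C_dec[of k] by linarith
qed

end



lemma loclip_cont:
  assumes "locally_lipschitz_on S \<phi>"
  shows "continuous_on S \<phi>"
  unfolding continuous_on_iff
proof (intro ballI allI impI)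
  fix y e assume y: "y \<in> S" and e: "(0::real) < e"
  obtain r K where r: "r > 0" and K: "\<forall>a\<in>S \<inter> ball y r. \<forall>b\<in>S \<inter> ball y r. dist (\<phi> a) (\<phi> b) \<le> K * dist a b"
    using assms y unfolding locally_lipschitz_on_def by blast
  define dd where "dd = min r (e / (\<bar>K\<bar> + 1))"
  have dd: "dd > 0" using r e by (simp add: dd_def add_pos_nonneg)
  show "\<exists>dd>0. \<forall>z\<in>S. dist z y < dd \<longrightarrow> dist (\<phi> z) (\<phi> y) < e"
  proof (intro exI[of _ dd] conjI ballI impI)
    show "dd > 0" by fact
    fix z assume z: "z \<in> S" "dist z y < dd"
    have zb: "z \<in> S \<inter> ball y r" using z by (simp add: dd_def dist_commute)
    have yb: "y \<in> S \<inter> ball y r" using y r by simp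
    have "dist (\<phi> z) (\<phi> y) \<le> K * dist z y" using K zb yb by blast
    also have "\<dots> \<le> \<bar>K\<bar> * dist z y" by (simp add: mult_right_mono)
    also have "\<dots> \<le> \<bar>K\<bar> * dd" using z by (simp add: mult_left_mono)
    also have "\<dots> < e"
    proof -
      have "dd \<le> e / (\<bar>K\<bar> + 1)" by (simp add: dd_def)
      hence "(\<bar>K\<bar> + 1) * dd \<le> e" by (simp add: le_divide_eq mult.commute add_pos_nonneg)
      thus ?thesis using dd by (simp add: distrib_right)
    qed
    finally show "dist (\<phi> z) (\<phi> y) < e" .
  qed
qed

context ppga_loc begin

definition "K = {y. F y \<le> ereal (C 0)}"

lemma K_compact: "compact K"
proof -
  have "closed K" unfolding K_def by (rule lsc_closed_sublevel[OF A1_vi_lsc])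
  moreover have "bounded K" using A1_vi_lb unfolding K_def level_bounded_def by blast
  ultimately show ?thesis by (simp add: compact_eq_bounded_closed)
qed

lemma x_K: "x k \<in> K"
  unfolding K_def using F_x[of k] decseqD[OF C_decseq, of 0 k] by simp

lemma K_Om: "K \<subseteq> Om"
  unfolding K_def using F_notOm by force

lemma g_cont_at: "y \<in> Om \<Longrightarrow> isCont g y"
  using A1_ii_diff has_derivative_continuous by blast

lemma h_cont: "isCont h y"
  using A1_iii_diff has_derivative_continuous by blast

lemma gradh_cont: "isCont gradh y"
proof -
  have "locally_lipschitz_on UNIV gradh"
    unfolding locally_lipschitz_on_def
  proof
    fix y :: 'a
    have "\<forall>a\<in>UNIV \<inter> ball y 1. \<forall>b\<in>UNIV \<inter> ball y 1. dist (gradh a) (gradh b) \<le> L * dist a b"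
      using A1_iii_lip by (simp add: dist_norm)
    thus "\<exists>e>0. \<exists>K. \<forall>a\<in>UNIV \<inter> ball y e. \<forall>b\<in>UNIV \<inter> ball y e. dist (gradh a) (gradh b) \<le> K * dist a b"
      by (intro exI[of _ "1::real"] conjI exI[of _ L]) auto
  qed
  hence "continuous_on UNIV gradh" by (rule loclip_cont)
  thus ?thesis by (simp add: continuous_on_eq_continuous_at)
qed

lemma ex_bounds: "\<exists>gmin gmax Gb Hb. gmin > 0 \<and> (\<forall>y\<in>K. gmin \<le> g y \<and> g y \<le> gmax \<and> norm (gradg y) \<le> Gb \<and> norm (gradh y) \<le> Hb)"
proof -
  have ne: "K \<noteq> {}" using x_K by blast
  have cg: "continuous_on K g" using g_cont_at K_Om by (meson continuous_at_imp_continuous_on subsetD)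
  have cG: "continuous_on K (\<lambda>y. norm (gradg y))"
    using continuous_on_norm[OF continuous_on_subset[OF loclip_cont[OF A1_ii_lip] K_Om]] .
  have cH: "continuous_on K (\<lambda>y. norm (gradh y))"
    using gradh_cont by (intro continuous_on_norm continuous_at_imp_continuous_on) auto
  obtain y1 where y1: "y1 \<in> K" "\<forall>y\<in>K. g y1 \<le> g y" using continuous_attains_inf[OF K_compact ne cg] by blast
  obtain y2 where y2: "\<forall>y\<in>K. g y \<le> g y2" using continuous_attains_sup[OF K_compact ne cg] by blast
  obtain y3 where y3: "\<forall>y\<in>K. norm (gradg y) \<le> norm (gradg y3)" using continuous_attains_sup[OF K_compact ne cG] by blast
  obtain y4 where y4: "\<forall>y\<in>K. norm (gradh y) \<le> norm (gradh y4)" using continuous_attains_sup[OF K_compact ne cH] by blast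
  have "g y1 > 0" using gpos y1(1) K_Om by blast
  thus ?thesis using y1 y2 y3 y4 by blast
qed

end




locale ppga_b = ppga_loc +
  fixes gmin gmax Gb Hb :: real
  assumes gmin: "gmin > 0"
    and bnds: "\<And>y. y \<in> K \<Longrightarrow> gmin \<le> g y \<and> g y \<le> gmax \<and> norm (gradg y) \<le> Gb \<and> norm (gradh y) \<le> Hb"
begin

lemma gx: "gmin \<le> g (x k)" "g (x k) \<le> gmax" "norm (gradg (x k)) \<le> Gb" "norm (gradh (x k)) \<le> Hb"
  using bnds[OF x_K[of k]] by auto

lemma gmax: "gmax > 0" using gx(1,2)[of 0] gmin by linarith

definition "a = cc / gmax"
lemma a_pos: "a > 0" unfolding a_def using cc_pos gmax by simp

lemma dec: "a * (d k)^2 \<le> C k - C (Suc k)"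
proof -
  have gp: "0 < g (x (Suc k))" "g (x (Suc k)) \<le> gmax" using gx[of "Suc k"] gmin by auto
  have "cc * (d k)^2 \<ge> 0" using cc_pos by simp
  hence "cc * (d k)^2 / gmax \<le> cc * (d k)^2 / g (x (Suc k))" using gp by (simp add: frac_le)
  thus ?thesis using C_dec[of k] unfolding a_def by simp
qed

definition "Cs = lim C"
lemma C_lim: "C \<longlonglongrightarrow> Cs"
proof -
  obtain l where "C \<longlonglongrightarrow> l" using decseq_convergent[OF C_decseq, of 0] C_nonneg by blast
  thus ?thesis unfolding Cs_def by (simp add: limI)
qed

lemma Cs_le: "Cs \<le> C k" using decseq_ge[OF C_decseq C_lim] .

lemma d_nonneg: "d k \<ge> 0" unfolding d_def by simp

lemma d_lim: "d \<longlonglongrightarrow> 0"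
proof -
  have "(\<lambda>k. C k - C (Suc k)) \<longlonglongrightarrow> Cs - Cs"
    by (intro tendsto_diff C_lim) (rule LIMSEQ_Suc[OF C_lim])
  hence "(\<lambda>k. (C k - C (Suc k)) / a) \<longlonglongrightarrow> 0" by (simp add: tendsto_divide_zero)
  hence l: "(\<lambda>k. sqrt ((C k - C (Suc k)) / a)) \<longlonglongrightarrow> 0" using tendsto_real_sqrt by fastforce
  have "d k \<le> sqrt ((C k - C (Suc k)) / a)" for k
  proof -
    have "(d k)^2 \<le> (C k - C (Suc k)) / a" using dec[of k] a_pos by (simp add: le_divide_eq mult.commute)
    thus ?thesis using d_nonneg[of k] real_le_rsqrt by blast
  qed
  hence "\<forall>\<^sub>F k in sequentially. d k \<le> sqrt ((C k - C (Suc k)) / a)" by simp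
  moreover have "\<forall>\<^sub>F k in sequentially. 0 \<le> d k" using d_nonneg by simp
  ultimately show ?thesis using tendsto_sandwich[of "\<lambda>_. 0" d sequentially _ 0] l by auto
qed

definition "bb = (L + 1 / alo) / gmin"
definition "bb' = Gb / gmin"

lemma rel_err:
  "\<exists>v \<in> frechet_subdiff F (x (Suc k)). norm v \<le> bb * d k + bb' * (C k - C (Suc k))"
proof -
  define p where "p = x (Suc k)"
  define \<beta> where "\<beta> = C k - C (Suc k)"
  define w where "w = gradh p - q k + \<beta> *\<^sub>R gradg p"
  define M where "M = 1 / (2 * alo) + L / 2"
  have pOm: "p \<in> Om" unfolding p_def by (rule x_Om)
  have gp: "g p > 0" by (rule gpos[OF pOm])
  have \<beta>: "\<beta> \<ge> 0" unfolding \<beta>_def using decseqD[OF C_decseq, of k "Suc k"] by simp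
  have a: "\<alpha> k > 0" "alo \<le> \<alpha> k" using apos alo(4) by auto
  have Cp: "C (Suc k) * g p = fr p + h p" using C_Om[OF pOm] unfolding p_def by simp
  have "(1 / g p) *\<^sub>R w \<in> frechet_subdiff F p"
  proof (rule frechet_quot[where N="\<lambda>z. fr z + h z" and \<beta>=\<beta> and M=M])
    show "F p = ereal (C (Suc k))" unfolding p_def by (rule F_x)
    show "g p > 0" by fact
    show "(g has_derivative (\<lambda>v. inner (gradg p) v)) (at p)" using A1_ii_diff pOm by blast
    show "M \<ge> 0" unfolding M_def using alo A1_iii_L by simp
    fix z assume "F z \<noteq> \<infinity>"
    hence zOm: "z \<in> Om" by (rule F_notOm)
    have I: "fr z \<ge> fr p + C k * (g z - g p) - (norm (z - p))^2 / (2 * \<alpha> k) - inner (z - p) (q k)"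
      using IQ[of z k] zOm unfolding p_def by blast
    have al: "(norm (z - p))^2 / (2 * \<alpha> k) \<le> (norm (z - p))^2 / (2 * alo)"
      using a alo(1) by (simp add: frac_le)
    have hl: "h z \<ge> h p + inner (gradh p) (z - p) - L / 2 * (norm (z - p))^2" by (rule h_low)
    have wi: "inner w (z - p) = inner (gradh p) (z - p) - inner (z - p) (q k) + \<beta> * inner (gradg p) (z - p)"
      unfolding w_def inner_commute[of _ "z - p"] by (simp add: inner_add_right inner_diff_right)
    have e1: "C k * (g z - g p) = C (Suc k) * g z - C (Suc k) * g p + \<beta> * (g z - g p)"
      unfolding \<beta>_def by (simp add: algebra_simps)
    have e2: "M * (norm (z - p))^2 = (norm (z - p))^2 / (2 * alo) + L / 2 * (norm (z - p))^2"
      unfolding M_def by (simp add: algebra_simps)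
    have e3: "\<beta> * (g z - g p - inner (gradg p) (z - p)) = \<beta> * (g z - g p) - \<beta> * inner (gradg p) (z - p)"
      by (simp add: algebra_simps)
    show "g z > 0 \<and> F z = ereal ((fr z + h z) / g z) \<and>
          inner w (z - p) + \<beta> * (g z - g p - inner (gradg p) (z - p)) - M * (norm (z - p))^2 \<le> fr z + h z - C (Suc k) * g z"
      using gpos[OF zOm] F_Om[OF zOm] I al hl wi e1 e2 e3 Cp by linarith
  qed
  moreover have "norm ((1 / g p) *\<^sub>R w) \<le> bb * d k + bb' * \<beta>"
  proof -
    have "gradh p - q k = (gradh p - gradh (x k)) - (1 / \<alpha> k) *\<^sub>R (x (Suc k) - x k)"
      unfolding q_def by (simp add: algebra_simps)
    hence "norm (gradh p - q k) \<le> norm (gradh p - gradh (x k)) + norm ((1 / \<alpha> k) *\<^sub>R (x (Suc k) - x k))"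
      by (metis norm_triangle_ineq4)
    also have "norm (gradh p - gradh (x k)) \<le> L * d k"
      using A1_iii_lip unfolding d_def p_def by blast
    also have "norm ((1 / \<alpha> k) *\<^sub>R (x (Suc k) - x k)) = d k / \<alpha> k"
      using a unfolding d_def by simp
    also have "d k / \<alpha> k \<le> d k / alo" using a alo(1) d_nonneg[of k] by (simp add: frac_le)
    finally have n1: "norm (gradh p - q k) \<le> (L + 1 / alo) * d k" by (simp add: algebra_simps)
    have n2: "norm (\<beta> *\<^sub>R gradg p) \<le> \<beta> * Gb" using \<beta> gx(3)[of "Suc k"] unfolding p_def
      by (simp add: mult_left_mono)
    have "norm w \<le> (L + 1 / alo) * d k + \<beta> * Gb"
      unfolding w_def using norm_triangle_ineq[of "gradh p - q k" "\<beta> *\<^sub>R gradg p"] n1 n2 by linarith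
    moreover have "gmin \<le> g p" using gx(1)[of "Suc k"] unfolding p_def .
    ultimately have "norm w / g p \<le> ((L + 1 / alo) * d k + \<beta> * Gb) / gmin"
      using gmin gp by (meson frac_le norm_ge_zero order_trans)
    thus ?thesis using gp unfolding bb_def bb'_def by (simp add: add_divide_distrib algebra_simps)
  qed
  ultimately show ?thesis unfolding p_def \<beta>_def by blast
qed

end



context ppga_b begin

lemma cluster: "\<exists>xb \<sigma>. xb \<in> K \<and> strict_mono \<sigma> \<and> (x \<circ> \<sigma>) \<longlonglongrightarrow> xb"
  using seq_compactE[OF compact_imp_seq_compact[OF K_compact], of x] x_K by metis

lemma q_bound: "\<exists>Qb. \<forall>k. norm (q k) \<le> Qb"
proof -
  obtain Db where Db: "\<And>k. norm (d k) \<le> Db" using BseqE[OF convergent_imp_Bseq[OF convergentI[OF d_lim]]] by metis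
  have "norm (q k) \<le> Db / alo + Hb" for k
  proof -
    have "norm (q k) \<le> norm ((1 / \<alpha> k) *\<^sub>R (x (Suc k) - x k)) + norm (gradh (x k))"
      unfolding q_def by (rule norm_triangle_ineq)
    also have "norm ((1 / \<alpha> k) *\<^sub>R (x (Suc k) - x k)) = d k / \<alpha> k" using apos[of k] unfolding d_def by simp
    also have "d k / \<alpha> k \<le> Db / alo"
      using Db[of k] d_nonneg[of k] apos[of k] alo(1) alo(4)[of k] by (simp add: frac_le)
    finally show ?thesis using gx(4)[of k] by linarith
  qed
  thus ?thesis by blast
qed

lemma next_lim:
  assumes "strict_mono \<sigma>" "(x \<circ> \<sigma>) \<longlonglongrightarrow> xb"
  shows "(\<lambda>j. x (Suc (\<sigma> j))) \<longlonglongrightarrow> xb"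
proof -
  have "(\<lambda>j. d (\<sigma> j)) \<longlonglongrightarrow> 0" using LIMSEQ_subseq_LIMSEQ[OF d_lim assms(1)] by (simp add: o_def)
  hence "(\<lambda>j. x (Suc (\<sigma> j)) - x (\<sigma> j)) \<longlonglongrightarrow> 0" unfolding d_def by (rule tendsto_norm_zero_cancel)
  hence "(\<lambda>j. x (\<sigma> j) + (x (Suc (\<sigma> j)) - x (\<sigma> j))) \<longlonglongrightarrow> xb + 0"
    using assms(2) by (intro tendsto_add) (auto simp: o_def)
  thus ?thesis by simp
qed

lemma cluster_val:
  assumes xb: "xb \<in> K" and sm: "strict_mono \<sigma>" and lim: "(x \<circ> \<sigma>) \<longlonglongrightarrow> xb"
  shows "(fr xb + h xb) / g xb = Cs"
proof (rule antisym)
  have xbOm: "xb \<in> Om" using xb K_Om by blast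
  have "F xb \<le> ereal Cs"
    using lsc_seq[OF A1_vi_lsc lim, of "C \<circ> \<sigma>" Cs] F_x LIMSEQ_subseq_LIMSEQ[OF C_lim sm] by simp
  thus "(fr xb + h xb) / g xb \<le> Cs" using F_Om[OF xbOm] by simp
  define p where "p j = x (Suc (\<sigma> j))" for j
  have pl: "p \<longlonglongrightarrow> xb" unfolding p_def by (rule next_lim[OF sm lim])
  obtain Qb where Qb: "\<And>k. norm (q k) \<le> Qb" using q_bound by blast
  define E where "E j = C 0 * \<bar>g (p j) - g xb\<bar> + (norm (xb - p j))^2 / (2 * alo) + norm (xb - p j) * Qb" for j
  have gl: "(\<lambda>j. g (p j)) \<longlonglongrightarrow> g xb" using isCont_tendsto_compose[OF g_cont_at[OF xbOm] pl] .
  have hl: "(\<lambda>j. h (p j)) \<longlonglongrightarrow> h xb" using isCont_tendsto_compose[OF h_cont pl] .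
  have dl: "(\<lambda>j. norm (xb - p j)) \<longlonglongrightarrow> 0"
    using tendsto_norm[OF tendsto_diff[OF tendsto_const pl, of xb]] by simp
  have El: "E \<longlonglongrightarrow> 0"
  proof -
    have "(\<lambda>j. \<bar>g (p j) - g xb\<bar>) \<longlonglongrightarrow> 0" using tendsto_rabs[OF tendsto_diff[OF gl tendsto_const, of "g xb"]] by simp
    hence "E \<longlonglongrightarrow> C 0 * 0 + 0\<^sup>2 / (2 * alo) + 0 * Qb" unfolding E_def
      by (intro tendsto_intros dl) (use alo(1) in auto)
    thus ?thesis by simp
  qed
  have le: "C (Suc (\<sigma> j)) \<le> (fr xb + E j + h (p j)) / g (p j)" for j
  proof -
    define k where "k = \<sigma> j"
    have pk: "p j = x (Suc k)" unfolding p_def k_def by simp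
    have I: "fr xb \<ge> fr (p j) + C k * (g xb - g (p j)) - (norm (xb - p j))^2 / (2 * \<alpha> k) - inner (xb - p j) (q k)"
      using IQ[of xb k] xbOm pk by simp
    have t1: "C k * (g (p j) - g xb) \<le> C 0 * \<bar>g (p j) - g xb\<bar>"
    proof -
      have "C k * (g (p j) - g xb) \<le> C k * \<bar>g (p j) - g xb\<bar>" using C_nonneg[of k] by (simp add: mult_left_mono)
      also have "\<dots> \<le> C 0 * \<bar>g (p j) - g xb\<bar>" using decseqD[OF C_decseq, of 0 k] by (simp add: mult_right_mono)
      finally show ?thesis .
    qed
    have t2: "(norm (xb - p j))^2 / (2 * \<alpha> k) \<le> (norm (xb - p j))^2 / (2 * alo)"
      using apos[of k] alo(1) alo(4)[of k] by (simp add: frac_le)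
    have t3: "inner (xb - p j) (q k) \<le> norm (xb - p j) * Qb"
      using norm_cauchy_schwarz[of "xb - p j" "q k"] Qb[of k] by (meson mult_left_mono norm_ge_zero order_trans)
    have "fr (p j) \<le> fr xb + E j" unfolding E_def using I t1 t2 t3 by (simp add: algebra_simps)
    moreover have gp: "g (p j) > 0" using gpos[OF x_Om] pk by simp
    ultimately have "(fr (p j) + h (p j)) / g (p j) \<le> (fr xb + E j + h (p j)) / g (p j)"
      by (simp add: divide_right_mono)
    thus ?thesis using C_eq[of "Suc k"] pk k_def by simp
  qed
  have "(\<lambda>j. C (Suc (\<sigma> j))) \<longlonglongrightarrow> Cs"
    using LIMSEQ_subseq_LIMSEQ[OF LIMSEQ_Suc[OF C_lim] sm] by (simp add: o_def)
  moreover have "(\<lambda>j. (fr xb + E j + h (p j)) / g (p j)) \<longlonglongrightarrow> (fr xb + 0 + h xb) / g xb"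
    using gpos[OF xbOm] by (intro tendsto_intros El hl gl) auto
  ultimately show "Cs \<le> (fr xb + h xb) / g xb" using le by (simp add: LIMSEQ_le)
qed

end



lemma sum_trap:
  fixes dd P :: "nat \<Rightarrow> real"
  assumes nn: "\<And>k. dd k \<ge> 0" "\<And>k. N \<le> k \<Longrightarrow> P k \<ge> 0"
    and SI: "\<And>k. N \<le> k \<Longrightarrow> k < m \<Longrightarrow> 2 * dd (Suc k) \<le> P k - P (Suc k) + dd k / 2"
    and Nm: "N \<le> m"
  shows "(\<Sum>k\<in>{N..<Suc m}. dd k) \<le> 2/3 * (2 * dd N + P N)"
proof -
  have T: "n \<le> m \<Longrightarrow> (\<Sum>k\<in>{N..<n}. 2 * dd (Suc k) - dd k / 2) \<le> P N - P n" if "N \<le> n" for n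
    using that
  proof (induction n rule: dec_induct)
    case base thus ?case by simp
  next
    case (step n)
    have "(\<Sum>k\<in>{N..<Suc n}. 2 * dd (Suc k) - dd k / 2) = (\<Sum>k\<in>{N..<n}. 2 * dd (Suc k) - dd k / 2) + (2 * dd (Suc n) - dd n / 2)"
      using step.hyps by simp
    also have "\<dots> \<le> (P N - P n) + (P n - P (Suc n))" using step SI[of n] by simp
    finally show ?case by simp
  qed
  have S: "(\<Sum>k\<in>{N..<n}. dd (Suc k)) = (\<Sum>k\<in>{N..<Suc n}. dd k) - dd N" if "N \<le> n" for n
    using that
  proof (induction n rule: dec_induct)
    case base thus ?case by simp
  next
    case (step n)
    thus ?case using step.hyps by simp
  qed
  have "(\<Sum>k\<in>{N..<m}. 2 * dd (Suc k) - dd k / 2) = 2 * (\<Sum>k\<in>{N..<m}. dd (Suc k)) - (\<Sum>k\<in>{N..<m}. dd k) / 2"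
    by (simp add: sum_subtractf sum_distrib_left sum_divide_distrib)
  also have "\<dots> = 2 * ((\<Sum>k\<in>{N..<Suc m}. dd k) - dd N) - (\<Sum>k\<in>{N..<m}. dd k) / 2" using S[OF Nm] by simp
  finally have e: "(\<Sum>k\<in>{N..<m}. 2 * dd (Suc k) - dd k / 2) = 2 * ((\<Sum>k\<in>{N..<Suc m}. dd k) - dd N) - (\<Sum>k\<in>{N..<m}. dd k) / 2" .
  have W: "(\<Sum>k\<in>{N..<m}. dd k) \<le> (\<Sum>k\<in>{N..<Suc m}. dd k)" using Nm nn(1)[of m] by simp
  have X: "2 * ((\<Sum>k\<in>{N..<Suc m}. dd k) - dd N) - (\<Sum>k\<in>{N..<m}. dd k) / 2 \<le> P N - P m"
    using T[OF Nm order_refl] unfolding e .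
  have gen: "\<And>A B :: real. 2 * (A - dd N) - B / 2 \<le> P N - P m \<Longrightarrow> B \<le> A \<Longrightarrow> 3 * A \<le> 2 * (2 * dd N + P N)"
    using nn(2)[OF Nm] by (simp add: field_simps)
  have "3 * (\<Sum>k\<in>{N..<Suc m}. dd k) \<le> 2 * (2 * dd N + P N)" by (rule gen[OF X W])
  thus ?thesis by linarith
qed

context ppga_b begin

definition "r k = C k - Cs"
definition "AA = 2 * bb / a"
definition "BB = bb' / (2 * bb)"

lemma r_nonneg: "r k \<ge> 0" unfolding r_def using Cs_le by simp
lemma r_dec: "r (Suc k) \<le> r k" unfolding r_def using decseqD[OF C_decseq, of k "Suc k"] by simp
lemma bb_pos: "bb > 0"
proof -
  have "1 / alo > 0" using alo(1) by simp
  hence "L + 1 / alo > 0" using A1_iii_L by linarith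
  thus ?thesis unfolding bb_def using gmin by simp
qed
lemma bb'_nonneg: "bb' \<ge> 0" unfolding bb'_def using gmin gx(3)[of 0] by (simp add: order_trans[OF norm_ge_zero])
lemma BB_nonneg: "BB \<ge> 0" unfolding BB_def using bb_pos bb'_nonneg by simp
lemma AA_pos: "AA > 0" unfolding AA_def using bb_pos a_pos by simp

lemma SI:
  assumes xb: "xb \<in> K" and Fb: "(fr xb + h xb) / g xb = Cs"
    and cc: "concave_on {t. 0 \<le> t \<and> ereal t < \<eta>} \<psi>"
    and der: "\<forall>t. 0 < t \<and> ereal t < \<eta> \<longrightarrow> (\<psi> has_real_derivative \<psi>' t) (at t) \<and> \<psi>' t > 0"
    and kl: "\<forall>y\<in>U. F xb < F y \<and> F y < F xb + \<eta> \<longrightarrow>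
            ereal (\<psi>' (real_of_ereal (F y - F xb))) * dist_set 0 (limiting_subdiff F y) \<ge> 1"
    and xU: "x (Suc k) \<in> U" and rl: "ereal (r (Suc k)) < \<eta>"
  shows "2 * d (Suc k) \<le> AA * (\<psi> (r (Suc k)) - \<psi> (r (Suc (Suc k)))) + d k / 2 + BB * (r k - r (Suc k))"
proof (cases "r (Suc k) = 0")
  case True
  hence r2: "r (Suc (Suc k)) = 0" using r_dec[of "Suc k"] r_nonneg[of "Suc (Suc k)"] by simp
  have "a * (d (Suc k))^2 \<le> 0" using dec[of "Suc k"] True r2 unfolding r_def by simp
  hence "d (Suc k) = 0" using a_pos by (simp add: mult_le_0_iff)
  moreover have "BB * (r k - r (Suc k)) \<ge> 0" using BB_nonneg r_dec[of k] by simp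
  ultimately show ?thesis using True r2 d_nonneg[of k] by simp
next
  case False
  define s where "s = Suc k"
  have rs: "r s > 0" using False r_nonneg[of "Suc k"] unfolding s_def by simp
  have rl': "ereal (r s) < \<eta>" using rl unfolding s_def .
  have xbOm: "xb \<in> Om" using xb K_Om by blast
  have Fxb: "F xb = ereal Cs" using F_Om[OF xbOm] Fb by simp
  have lt1: "F xb < F (x s)" using Fxb F_x[of s] rs unfolding r_def by simp
  have lt2: "F (x s) < F xb + \<eta>"
  proof (cases \<eta>)
    case (real e) thus ?thesis using Fxb F_x[of s] rl' unfolding r_def by simp
  next
    case PInf thus ?thesis using Fxb F_x[of s] by simp
  next
    case MInf thus ?thesis using rl' by simp
  qed
  have "1 \<le> ereal (\<psi>' (real_of_ereal (F (x s) - F xb))) * dist_set 0 (limiting_subdiff F (x s))"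
    using kl xU lt1 lt2 unfolding s_def by blast
  moreover have "real_of_ereal (F (x s) - F xb) = r s" using Fxb F_x[of s] unfolding r_def by simp
  ultimately have k1: "1 \<le> ereal (\<psi>' (r s)) * dist_set 0 (limiting_subdiff F (x s))" by simp
  have dpos: "\<psi>' (r s) > 0" and dd: "(\<psi> has_real_derivative \<psi>' (r s)) (at (r s))" using der rs rl' by auto
  obtain v where v: "v \<in> frechet_subdiff F (x s)" "norm v \<le> bb * d k + bb' * (C k - C s)"
    using rel_err[of k] unfolding s_def by blast
  define Q where "Q = bb * d k + bb' * (C k - C s)"
  have Qnn: "Q \<ge> 0" unfolding Q_def using bb_pos bb'_nonneg d_nonneg[of k] r_dec[of k] unfolding r_def s_def by simp
  have "dist_set 0 (limiting_subdiff F (x s)) \<le> ereal Q" using frechet_limiting[OF v(1)] v(2) unfolding Q_def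
    by (meson ereal_less_eq(3) order_trans)
  hence "ereal (\<psi>' (r s)) * dist_set 0 (limiting_subdiff F (x s)) \<le> ereal (\<psi>' (r s)) * ereal Q"
    using dpos by (intro ereal_mult_left_mono) auto
  hence "1 \<le> ereal (\<psi>' (r s) * Q)" using k1 by (metis order_trans times_ereal.simps(1))
  hence PQ: "\<psi>' (r s) * Q \<ge> 1" by simp
  have tan: "\<psi> (r s) - \<psi> (r (Suc s)) \<ge> \<psi>' (r s) * (r s - r (Suc s))"
    using concave_tangent[OF cc rs rl' dd r_nonneg r_dec] .
  have decs: "a * (d s)^2 \<le> r s - r (Suc s)" using dec[of s] unfolding r_def by simp
  define D where "D = \<psi> (r s) - \<psi> (r (Suc s))"
  have ad: "a * (d s)^2 \<ge> 0" using a_pos by simp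
  have "\<psi>' (r s) * (a * (d s)^2) \<le> D" unfolding D_def using tan decs dpos
    by (meson mult_left_mono less_imp_le order_trans)
  hence "Q * (\<psi>' (r s) * (a * (d s)^2)) \<le> Q * D" using Qnn by (simp add: mult_left_mono)
  moreover have "a * (d s)^2 \<le> (\<psi>' (r s) * Q) * (a * (d s)^2)" using PQ ad by (simp add: mult_le_cancel_right1)
  ultimately have aQD: "a * (d s)^2 \<le> Q * D" by (simp add: algebra_simps)
  have Dnn: "D \<ge> 0" unfolding D_def using tan dpos r_dec[of s] by (smt (verit) mult_nonneg_nonneg)
  have "(d s)^2 \<le> (AA * D) * (Q / (2 * bb))"
  proof -
    have "(AA * D) * (Q / (2 * bb)) = Q * D / a" unfolding AA_def using bb_pos a_pos by (simp add: field_simps)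
    thus ?thesis using aQD a_pos by (simp add: le_divide_eq mult.commute)
  qed
  hence "2 * d s \<le> AA * D + Q / (2 * bb)"
    using amgm_le[of "d s" "AA * D" "Q / (2 * bb)"] d_nonneg AA_pos Dnn Qnn bb_pos by simp
  moreover have "Q / (2 * bb) = d k / 2 + BB * (r k - r s)"
    unfolding Q_def BB_def r_def using bb_pos by (simp add: field_simps)
  ultimately show ?thesis unfolding D_def s_def by simp
qed

end



context ppga_b begin

lemma stat:
  assumes xl: "x \<longlonglongrightarrow> xb" and xbOm: "xb \<in> Om" and Fb: "(fr xb + h xb) / g xb = Cs"
  shows "0 \<in> frechet_subdiff F xb"
proof -
  have gxb: "g xb > 0" using gpos[OF xbOm] .
  have Cg: "Cs * g xb = fr xb + h xb" using Fb gxb by (simp add: field_simps)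
  define p where "p k = x (Suc k)" for k
  have pl: "p \<longlonglongrightarrow> xb" unfolding p_def by (rule LIMSEQ_Suc[OF xl])
  have gl: "(\<lambda>k. g (p k)) \<longlonglongrightarrow> g xb" using isCont_tendsto_compose[OF g_cont_at[OF xbOm] pl] .
  have hl: "(\<lambda>k. h (p k)) \<longlonglongrightarrow> h xb" using isCont_tendsto_compose[OF h_cont pl] .
  have frl: "(\<lambda>k. fr (p k)) \<longlonglongrightarrow> fr xb"
  proof -
    have e: "fr (p k) = C (Suc k) * g (p k) - h (p k)" for k
      using C_Om[OF x_Om refl, of "Suc k"] unfolding p_def by simp
    have "(\<lambda>k. C (Suc k) * g (p k) - h (p k)) \<longlonglongrightarrow> Cs * g xb - h xb"
      by (intro tendsto_intros LIMSEQ_Suc[OF C_lim] gl hl)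
    thus ?thesis unfolding e using Cg by simp
  qed
  have ql: "q \<longlonglongrightarrow> gradh xb"
  proof -
    have "(\<lambda>k. d k / alo) \<longlonglongrightarrow> 0 / alo" by (rule tendsto_divide[OF d_lim tendsto_const]) (use alo(1) in simp)
    hence l0: "(\<lambda>k. d k / alo) \<longlonglongrightarrow> 0" by simp
    have "norm ((1 / \<alpha> k) *\<^sub>R (x (Suc k) - x k)) \<le> d k / alo" for k
      using apos[of k] alo(1) alo(4)[of k] d_nonneg[of k] unfolding d_def by (simp add: frac_le)
    hence "(\<lambda>k. norm ((1 / \<alpha> k) *\<^sub>R (x (Suc k) - x k))) \<longlonglongrightarrow> 0"
      using tendsto_sandwich[of "\<lambda>_. 0" _ sequentially "\<lambda>k. d k / alo" 0] l0 by auto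
    hence "(\<lambda>k. (1 / \<alpha> k) *\<^sub>R (x (Suc k) - x k)) \<longlonglongrightarrow> 0" by (rule tendsto_norm_zero_cancel)
    moreover have "(\<lambda>k. gradh (x k)) \<longlonglongrightarrow> gradh xb" using isCont_tendsto_compose[OF gradh_cont xl] .
    ultimately have "(\<lambda>k. (1 / \<alpha> k) *\<^sub>R (x (Suc k) - x k) + gradh (x k)) \<longlonglongrightarrow> 0 + gradh xb"
      by (rule tendsto_add)
    thus ?thesis unfolding q_def[abs_def] by simp
  qed
  define M where "M = 1 / (2 * alo) + L / 2"
  have "(1 / g xb) *\<^sub>R 0 \<in> frechet_subdiff F xb"
  proof (rule frechet_quot[where N="\<lambda>z. fr z + h z" and \<beta>=0 and M=M])
    show "F xb = ereal Cs" using F_Om[OF xbOm] Fb by simp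
    show "g xb > 0" by fact
    show "(g has_derivative (\<lambda>v. inner (gradg xb) v)) (at xb)" using A1_ii_diff xbOm by blast
    show "M \<ge> 0" unfolding M_def using alo A1_iii_L by simp
    fix z assume "F z \<noteq> \<infinity>"
    hence zOm: "z \<in> Om" by (rule F_notOm)
    define T where "T k = fr (p k) + C k * (g z - g (p k)) - (norm (z - p k))^2 / (2 * alo) - inner (z - p k) (q k)" for k
    have Tle: "T k \<le> fr z" for k
    proof -
      have I: "fr z \<ge> fr (p k) + C k * (g z - g (p k)) - (norm (z - p k))^2 / (2 * \<alpha> k) - inner (z - p k) (q k)"
        using IQ[of z k] zOm unfolding p_def by blast
      have "(norm (z - p k))^2 / (2 * \<alpha> k) \<le> (norm (z - p k))^2 / (2 * alo)"
        using apos[of k] alo(1) alo(4)[of k] by (simp add: frac_le)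
      thus ?thesis using I unfolding T_def by linarith
    qed
    have "T \<longlonglongrightarrow> fr xb + Cs * (g z - g xb) - (norm (z - xb))^2 / (2 * alo) - inner (z - xb) (gradh xb)"
      unfolding T_def[abs_def] by (intro tendsto_intros frl C_lim gl pl ql) (use alo(1) in simp)
    hence lim: "fr xb + Cs * (g z - g xb) - (norm (z - xb))^2 / (2 * alo) - inner (z - xb) (gradh xb) \<le> fr z"
      using Tle by (intro LIMSEQ_le_const2) auto
    have hz: "h z \<ge> h xb + inner (gradh xb) (z - xb) - L / 2 * (norm (z - xb))^2" by (rule h_low)
    have e1: "inner (z - xb) (gradh xb) = inner (gradh xb) (z - xb)" by (rule inner_commute)
    have e2: "M * (norm (z - xb))^2 = (norm (z - xb))^2 / (2 * alo) + L / 2 * (norm (z - xb))^2"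
      unfolding M_def by (simp add: algebra_simps)
    have e3: "Cs * (g z - g xb) = Cs * g z - Cs * g xb" by (simp add: algebra_simps)
    show "g z > 0 \<and> F z = ereal ((fr z + h z) / g z) \<and>
          inner 0 (z - xb) + 0 * (g z - g xb - inner (gradg xb) (z - xb)) - M * (norm (z - xb))^2 \<le> fr z + h z - Cs * g z"
      using gpos[OF zOm] F_Om[OF zOm] lim hz e1 e2 e3 Cg by simp
  qed
  thus ?thesis by simp
qed

theorem main_b: "summable (\<lambda>k. norm (x (Suc k) - x k)) \<and> (\<exists>xs. x \<longlonglongrightarrow> xs \<and> 0 \<in> frechet_subdiff F xs)"
proof -
  obtain xb \<sigma> where xb: "xb \<in> K" and sm: "strict_mono \<sigma>" and lim: "(x \<circ> \<sigma>) \<longlonglongrightarrow> xb"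
    using cluster by blast
  have Fb: "(fr xb + h xb) / g xb = Cs" by (rule cluster_val[OF xb sm lim])
  have xbOm: "xb \<in> Om" using xb K_Om by blast
  have "F xb \<noteq> \<infinity>" using F_Om[OF xbOm] by simp
  hence "xb \<in> effdom F" unfolding effdom_def by simp
  hence "KL_property F xb" using KL by blast
  then obtain \<eta> U \<psi> \<psi>' where
      \<eta>: "\<eta> > 0" and U: "open U" "xb \<in> U"
    and cont: "continuous_on {t. 0 \<le> t \<and> ereal t < \<eta>} \<psi>"
    and cc: "concave_on {t. 0 \<le> t \<and> ereal t < \<eta>} \<psi>"
    and psnn: "\<forall>t. 0 \<le> t \<and> ereal t < \<eta> \<longrightarrow> \<psi> t \<ge> 0" and ps0: "\<psi> 0 = 0"
    and der: "\<forall>t. 0 < t \<and> ereal t < \<eta> \<longrightarrow> (\<psi> has_real_derivative \<psi>' t) (at t) \<and> \<psi>' t > 0"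
    and kl: "\<forall>y\<in>U. F xb < F y \<and> F y < F xb + \<eta> \<longrightarrow>
            ereal (\<psi>' (real_of_ereal (F y - F xb))) * dist_set 0 (limiting_subdiff F y) \<ge> 1"
    unfolding KL_property_def by blast
  obtain \<rho> where \<rho>: "\<rho> > 0" "ball xb \<rho> \<subseteq> U" using U open_contains_ball by blast
  define S where "S = {t. 0 \<le> t \<and> ereal t < \<eta>}"
  define P where "P k = AA * \<psi> (r (Suc k)) + BB * r k" for k
  have rl: "r \<longlonglongrightarrow> 0" using tendsto_diff[OF C_lim tendsto_const, of Cs] unfolding r_def[abs_def] by simp
  have ev1: "eventually (\<lambda>k. ereal (r k) < \<eta>) sequentially"
  proof -
    have "(\<lambda>k. ereal (r k)) \<longlonglongrightarrow> ereal 0" using rl by simp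
    thus ?thesis using \<eta> order_tendstoD(2) zero_ereal_def by metis
  qed
  have ev1': "eventually (\<lambda>k. r (Suc k) \<in> S) sequentially"
    using ev1 r_nonneg unfolding S_def eventually_sequentially by (metis le_SucI mem_Collect_eq)
  have psl: "(\<lambda>k. \<psi> (r (Suc k))) \<longlonglongrightarrow> \<psi> 0"
    using continuous_on_tendsto_compose[OF cont[folded S_def] LIMSEQ_Suc[OF rl] _ ev1'] \<eta> unfolding S_def by (simp add: zero_ereal_def[symmetric])
  have Pl: "P \<longlonglongrightarrow> 0"
  proof -
    have "P \<longlonglongrightarrow> AA * \<psi> 0 + BB * 0" unfolding P_def[abs_def] by (intro tendsto_intros psl rl)
    thus ?thesis using ps0 by simp
  qed
  have ev2: "eventually (\<lambda>k. d k < \<rho> / 8) sequentially" using order_tendstoD(2)[OF d_lim, of "\<rho>/8"] \<rho> by simp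
  have ev3: "eventually (\<lambda>k. P k < \<rho> / 4) sequentially" using order_tendstoD(2)[OF Pl, of "\<rho>/4"] \<rho> by simp
  obtain N0 where N0: "\<And>k. k \<ge> N0 \<Longrightarrow> ereal (r k) < \<eta> \<and> d k < \<rho> / 8 \<and> P k < \<rho> / 4"
    using eventually_conj[OF ev1 eventually_conj[OF ev2 ev3]] unfolding eventually_sequentially by blast
  have "eventually (\<lambda>j. dist (x (\<sigma> j)) xb < \<rho> / 2) sequentially"
    using tendstoD[OF lim, of "\<rho>/2"] \<rho> by (simp add: o_def)
  then obtain J where J: "\<And>j. j \<ge> J \<Longrightarrow> dist (x (\<sigma> j)) xb < \<rho> / 2" unfolding eventually_sequentially by blast
  define N where "N = \<sigma> (max J N0)"
  have NN0: "N \<ge> N0" unfolding N_def using seq_suble[OF sm, of "max J N0"] by simp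
  have xN: "norm (x N - xb) < \<rho> / 2" using J[of "max J N0"] unfolding N_def by (simp add: dist_norm)
  have PN: "P N < \<rho> / 4" and dN: "d N < \<rho> / 8" using N0[OF NN0] by auto
  have Pnn: "P k \<ge> 0" if "N \<le> k" for k
  proof -
    have "ereal (r (Suc k)) < \<eta>" using N0[of "Suc k"] NN0 that by simp
    hence "\<psi> (r (Suc k)) \<ge> 0" using psnn r_nonneg by blast
    thus ?thesis unfolding P_def using AA_pos BB_nonneg r_nonneg[of k] by simp
  qed
  have bound: "(\<Sum>k\<in>{N..<Suc n}. d k) < \<rho> / 2"
    if Nn: "N \<le> n" and inb: "\<And>k. N \<le> k \<Longrightarrow> k \<le> n \<Longrightarrow> x k \<in> ball xb \<rho>" for n
  proof -
    have "(\<Sum>k\<in>{N..<Suc n}. d k) \<le> 2/3 * (2 * d N + P N)"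
    proof (rule sum_trap[OF d_nonneg Pnn _ Nn])
      fix k assume k: "N \<le> k" "k < n"
      have "x (Suc k) \<in> U" using inb[of "Suc k"] k \<rho>(2) by auto
      moreover have "ereal (r (Suc k)) < \<eta>" using N0[of "Suc k"] NN0 k by simp
      ultimately have "2 * d (Suc k) \<le> AA * (\<psi> (r (Suc k)) - \<psi> (r (Suc (Suc k)))) + d k / 2 + BB * (r k - r (Suc k))"
        by (rule SI[OF xb Fb cc der kl])
      thus "2 * d (Suc k) \<le> P k - P (Suc k) + d k / 2" unfolding P_def by (simp add: algebra_simps)
    qed
    also have "\<dots> < 2/3 * (\<rho> / 4 + \<rho> / 4)" using PN dN by simp
    finally have X: "(\<Sum>k\<in>{N..<Suc n}. d k) < 2/3 * (\<rho> / 4 + \<rho> / 4)" .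
    have gen: "\<And>A::real. A < 2/3 * (\<rho> / 4 + \<rho> / 4) \<Longrightarrow> A < \<rho> / 2" using \<rho>(1) by (simp add: field_simps)
    show ?thesis by (rule gen[OF X])
  qed
  have dist_bound: "norm (x (Suc n) - xb) < \<rho>"
    if Nn: "N \<le> n" and b: "(\<Sum>k\<in>{N..<Suc n}. d k) < \<rho> / 2" for n
  proof -
    have "x (Suc n) - x N = (\<Sum>k\<in>{N..<Suc n}. x (Suc k) - x k)" using sum_Suc_diff'[of N "Suc n" x] Nn by simp
    hence "norm (x (Suc n) - x N) \<le> (\<Sum>k\<in>{N..<Suc n}. d k)" unfolding d_def by (simp only: norm_sum)
    moreover have "norm (x (Suc n) - xb) \<le> norm (x (Suc n) - x N) + norm (x N - xb)"
      using norm_triangle_ineq[of "x (Suc n) - x N" "x N - xb"] by simp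
    ultimately show ?thesis using b xN by linarith
  qed
  have inball: "\<forall>k. N \<le> k \<and> k \<le> n \<longrightarrow> x k \<in> ball xb \<rho>" if "N \<le> n" for n
    using that
  proof (induction n rule: dec_induct)
    case base
    thus ?case using xN \<rho> by (auto simp: dist_norm norm_minus_commute)
  next
    case (step n)
    have "norm (x (Suc n) - xb) < \<rho>" using dist_bound[OF step.hyps(1) bound[OF step.hyps(1)]] step.IH by blast
    hence "x (Suc n) \<in> ball xb \<rho>" by (simp add: dist_norm norm_minus_commute)
    thus ?case using step.IH by (auto simp: le_Suc_eq)
  qed
  have partial: "(\<Sum>k\<in>{N..<Suc n}. d k) < \<rho> / 2" if "N \<le> n" for n
    using bound[OF that] inball[OF that] by blast
  have summ: "summable d"
  proof (rule bounded_imp_summable[OF d_nonneg])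
    fix n
    have "(\<Sum>k\<le>n. d k) \<le> (\<Sum>k\<le>n + N. d k)" using d_nonneg by (intro sum_mono2) auto
    also have "\<dots> = (\<Sum>k\<in>{0..<N}. d k) + (\<Sum>k\<in>{N..<Suc (n + N)}. d k)"
      using sum.atLeastLessThan_concat[of 0 N "Suc (n + N)" d] by (simp add: atLeast0LessThan atMost_atLeast0 atLeastLessThanSuc_atLeastAtMost)
    also have "\<dots> \<le> (\<Sum>k\<in>{0..<N}. d k) + \<rho> / 2" using partial[of "n + N"] by simp
    finally show "(\<Sum>k\<le>n. d k) \<le> (\<Sum>k\<in>{0..<N}. d k) + \<rho> / 2" .
  qed
  hence summ': "summable (\<lambda>k. norm (x (Suc k) - x k))" unfolding d_def[abs_def] .
  have "summable (\<lambda>k. x (Suc k) - x k)" by (rule summable_norm_cancel[OF summ'])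
  hence "(\<lambda>n. \<Sum>k<n. x (Suc k) - x k) \<longlonglongrightarrow> (\<Sum>k. x (Suc k) - x k)" by (rule summable_LIMSEQ)
  hence "(\<lambda>n. x n - x 0) \<longlonglongrightarrow> (\<Sum>k. x (Suc k) - x k)" by (simp add: sum_lessThan_telescope)
  hence "(\<lambda>n. x 0 + (x n - x 0)) \<longlonglongrightarrow> x 0 + (\<Sum>k. x (Suc k) - x k)" by (intro tendsto_intros)
  hence xl0: "x \<longlonglongrightarrow> x 0 + (\<Sum>k. x (Suc k) - x k)" by simp
  have "(x \<circ> \<sigma>) \<longlonglongrightarrow> x 0 + (\<Sum>k. x (Suc k) - x k)" by (rule LIMSEQ_subseq_LIMSEQ[OF xl0 sm])
  hence "x 0 + (\<Sum>k. x (Suc k) - x k) = xb" using lim LIMSEQ_unique by blast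
  hence xl: "x \<longlonglongrightarrow> xb" using xl0 by simp
  show ?thesis using summ' xl stat[OF xl xbOm Fb] by blast
qed

end


context ppga_loc begin
lemma main_loc: "summable (\<lambda>k. norm (x (Suc k) - x k)) \<and> (\<exists>xs. x \<longlonglongrightarrow> xs \<and> 0 \<in> frechet_subdiff F xs)"
proof -
  obtain gmin gmax Gb Hb where b: "gmin > 0" "\<forall>y\<in>K. gmin \<le> g y \<and> g y \<le> gmax \<and> norm (gradg y) \<le> Gb \<and> norm (gradh y) \<le> Hb"
    using ex_bounds by blast
  interpret B: ppga_b f g h gradg gradh L \<alpha> x alo ahi gmin gmax Gb Hb
    by unfold_locales (use b in auto)
  show ?thesis by (rule B.main_b)
qed
end

theorem mainTheorem12:
  fixes f :: "'a::euclidean_space \<Rightarrow> ereal"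
    and g h :: "'a \<Rightarrow> real"
    and gradg gradh :: "'a \<Rightarrow> 'a"
    and L :: real
    and \<alpha> :: "nat \<Rightarrow> real"
    and x :: "nat \<Rightarrow> 'a"
  assumes f_proper: "proper_fun f"
    and f_lsc: "lsc_fun f"
    and A1_i: "locally_lipschitz_on (effdom f \<inter> {y. g y \<noteq> 0}) (\<lambda>y. real_of_ereal (f y))"
    and A1_ii_diff: "\<forall>y \<in> {y. g y \<noteq> 0} \<inter> effdom f. (g has_derivative (\<lambda>v. inner (gradg y) v)) (at y)"
    and A1_ii_lip: "locally_lipschitz_on ({y. g y \<noteq> 0} \<inter> effdom f) gradg"
    and A1_ii_pos: "\<forall>y \<in> {y. g y \<noteq> 0} \<inter> effdom f. g y > 0"
    and A1_iii_diff: "\<forall>y. (h has_derivative (\<lambda>v. inner (gradh y) v)) (at y)"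
    and A1_iii_lip: "\<forall>y z. norm (gradh y - gradh z) \<le> L * norm (y - z)"
    and A1_iii_L: "L > 0"
    and A1_iv_nonneg: "\<forall>y \<in> effdom f. f y + ereal (h y) \<ge> 0"
    and A1_iv_ne: "{y. g y \<noteq> 0} \<inter> effdom f \<noteq> {}"
    and A1_v: "\<forall>z (\<gamma>::real). \<gamma> \<ge> 0 \<longrightarrow> prox (\<lambda>u. f u - ereal (\<gamma> * g u)) z \<noteq> {}"
    and A1_vi_lsc: "lsc_fun (frac_obj f g h)"
    and A1_vi_lb: "level_bounded (frac_obj f g h)"
    and ppga: "PPGA_seq f g h gradh L \<alpha> x"
    and KL: "\<forall>y \<in> effdom (frac_obj f g h). KL_property (frac_obj f g h) y"
  shows "summable (\<lambda>k. norm (x (Suc k) - x k)) \<and>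
         (\<exists>xs. x \<longlonglongrightarrow> xs \<and> 0 \<in> frechet_subdiff (frac_obj f g h) xs)"
  proof -
  obtain alo ahi where a: "0 < alo" "alo \<le> ahi" "ahi < 1 / L" "\<forall>k. alo \<le> \<alpha> k \<and> \<alpha> k \<le> ahi"
    using ppga unfolding PPGA_seq_def by blast
  interpret P: ppga_loc f g h gradg gradh L \<alpha> x alo ahi
  proof (unfold_locales)
    show "x 0 \<in> {y. g y \<noteq> 0} \<inter> effdom f" using ppga unfolding PPGA_seq_def by blast
    show "\<And>k. x (Suc k) \<in> prox
        (\<lambda>u. ereal (\<alpha> k) * (f u - ereal (real_of_ereal (frac_obj f g h (x k)) * g u)))
        (x k - \<alpha> k *\<^sub>R gradh (x k))" using ppga unfolding PPGA_seq_def by blast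
  qed (use assms a in auto)
  show ?thesis by (rule P.main_loc)
qed

end
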